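(* Let $A\in\mathrm{GL}(n,2)$ have columns $\mathbf{a}_1,\dots,\mathbf{a}_n$, let $\rho$ be an $n$-qubit state, let $\varepsilon>0$ and $\delta\in(0,1)$. For each $i\in\{1,\dots,n\}$, let $Y_{i,1},\dots,Y_{i,m_i}\in\{0,1\}$ be the recorded outcomes of $m_i$ measurements of the stabilizer $g(\mathbf{a}_i)$ on independent copies of $\rho$ ($Y_{i,j}=1$ for outcome $+1$, $0$ for outcome $-1$), all $Y_{i,j}$ being mutually independent with $\mathbb{E}[Y_{i,j}]=a_i:=\frac{1+\mu_\rho(\mathbf{a}_i)}{2}$. Let $\widehat a_i=\frac1{m_i}\sum_{j=1}^{m_i}Y_{i,j}$ and $\widehat U_A=\min_{i}\widehat a_i$. If $$m_i\ge\left\lceil\frac{\log(2n/\delta)}{2\varepsilon^2}\right\rceil\quad\text{for all } i,$$ then with probability at least $1-\delta$, $|\widehat U_A-F_{\max}(A;\rho)|\le\varepsilon$, where $F_{\max}(A;\rho)=\max\{p(\mathbf{0}): p\in\Delta(\mathbb{F}_2^n),\ \widehat p(\mathbf{a}_i)=\mu_\rho(\mathbf{a}_i)\ \forall i\}$.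
   Context: Setting: $|\psi\rangle$ is an $n$-qubit stabilizer state whose stabilizer group is generated by independent commuting Pauli operators $g_1,\dots,g_n$; for $\mathbf{u}\in\mathbb{F}_2^n$, $g(\mathbf{u})=\prod_j g_j^{u_j}$. Syndrome projectors $\Pi_{\mathbf{s}}=2^{-n}\prod_j(I+(-1)^{s_j}g_j)$, $\mathbf{s}\in\mathbb{F}_2^n$, are orthogonal rank-one projectors summing to identity with $\Pi_{\mathbf{0}}=|\psi\rangle\langle\psi|$. $p_\rho(\mathbf{s})=\mathrm{tr}(\rho\Pi_{\mathbf{s}})$; $\mu_\rho(\mathbf{u})=\mathrm{tr}(\rho g(\mathbf{u}))=\widehat{p_\rho}(\mathbf{u})$, where $\widehat p(\mathbf{u})=\sum_{\mathbf{s}}(-1)^{\mathbf{u}\cdot\mathbf{s}}p(\mathbf{s})$ (mod-2 inner product). $\Delta(\mathbb{F}_2^n)$ is the set of probability distributions on $\mathbb{F}_2^n$; $\mathrm{GL}(n,2)$ the invertible binary $n\times n$ matrices. $\log$ is the natural logarithm. *)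

theory Defs
  imports "HOL-Probability.Probability" "HOL-Library.Z2"
begin

text \<open>Vectors in F_2^n are modelled as bit^'n, with n = CARD('n).
  The mod-2 inner product u.s :\<close>
definition dot2 :: "bit^'n::finite \<Rightarrow> bit^'n \<Rightarrow> bit" where
  "dot2 u s = (\<Sum>k\<in>UNIV. u $ k * s $ k)"

definition is_distr :: "(bit^'n::finite \<Rightarrow> real) \<Rightarrow> bool" where
  "is_distr p \<longleftrightarrow> (\<forall>s. 0 \<le> p s) \<and> (\<Sum>s\<in>UNIV. p s) = 1"

definition fhat :: "(bit^'n::finite \<Rightarrow> real) \<Rightarrow> bit^'n \<Rightarrow> real" where
  "fhat p u = (\<Sum>s\<in>UNIV. (if dot2 u s = 0 then 1 else -1) * p s)"

text \<open>F_max(A; rho), where the state rho enters only through its syndrome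
  distribution q = p_rho, whose transform gives mu_rho = hat q.\<close>
definition Fmax :: "bit^'n^'n::finite \<Rightarrow> (bit^'n \<Rightarrow> real) \<Rightarrow> real" where
  "Fmax A q = Sup {p 0 | p. is_distr p \<and> (\<forall>i. fhat p (column i A) = fhat q (column i A))}"

end

theory Submission
  imports Defs
begin


lemma UNIV_bit: "(UNIV::bit set) = {0,1}"
  using bit_not_zero_iff by blast

instance bit :: finite
  by standard (simp add: UNIV_bit)

lemma sum_vec_prod:
  fixes f :: "'n::finite \<Rightarrow> 'a::finite \<Rightarrow> real"
  shows "(\<Sum>t\<in>UNIV. \<Prod>i\<in>UNIV. f i (t$i)) = (\<Prod>i\<in>UNIV. \<Sum>b\<in>UNIV. f i b)"
proof -
  have "(\<Prod>i\<in>UNIV. \<Sum>b\<in>UNIV. f i b) = (\<Sum>g\<in>PiE UNIV (\<lambda>_. UNIV). \<Prod>i\<in>UNIV. f i (g i))"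
    by (rule prod_sum_PiE) auto
  also have "PiE UNIV (\<lambda>_. UNIV) = (UNIV :: ('n \<Rightarrow> 'a) set)"
    by (simp add: PiE_UNIV_domain)
  also have "(\<Sum>g\<in>UNIV. \<Prod>i\<in>UNIV. f i (g i)) = (\<Sum>t\<in>UNIV. \<Prod>i\<in>UNIV. f i (t$i))"
    by (rule sum.reindex_bij_witness[where i = vec_nth and j = vec_lambda]) auto
  finally show ?thesis by simp
qed

definition Pz :: "(bit^'n::finite \<Rightarrow> real) \<Rightarrow> bit^'n \<Rightarrow> real" where
  "Pz p u = (\<Sum>s\<in>UNIV. if dot2 u s = 0 then p s else 0)"

lemma fhat_alt: "fhat p u = 2 * Pz p u - (\<Sum>s\<in>UNIV. p s)"
proof -
  have "fhat p u = (\<Sum>s\<in>UNIV. 2 * (if dot2 u s = 0 then p s else 0) - p s)"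
    unfolding fhat_def by (rule sum.cong) auto
  also have "\<dots> = 2 * Pz p u - (\<Sum>s\<in>UNIV. p s)"
    by (simp add: sum_subtractf sum_distrib_left Pz_def)
  finally show ?thesis .
qed

lemma dot2_col: "dot2 (column i A) s = (transpose A *v s) $ i"
  unfolding dot2_def column_def transpose_def matrix_vector_mult_def by simp

lemma fhat_bound: assumes "is_distr q" shows "\<bar>fhat q u\<bar> \<le> 1"
proof -
  have "\<bar>fhat q u\<bar> \<le> (\<Sum>s\<in>UNIV. \<bar>(if dot2 u s = 0 then 1 else -1) * q s\<bar>)"
    unfolding fhat_def by (rule sum_abs)
  also have "\<dots> = (\<Sum>s\<in>UNIV. q s)"
    using assms unfolding is_distr_def by (intro sum.cong) auto
  finally show ?thesis using assms unfolding is_distr_def by simp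
qed

lemma Fmax_eq:
  fixes A :: "bit^'n^'n::finite"
  assumes "invertible A" "is_distr q"
  shows "Fmax A q = (MIN i. (1 + fhat q (column i A)) / 2)"
proof -
  define \<alpha> where "\<alpha> i = (1 + fhat q (column i A)) / 2" for i
  define m0 where "m0 = (MIN i. \<alpha> i)"
  have a01: "0 \<le> \<alpha> i \<and> \<alpha> i \<le> 1" for i
    using fhat_bound[OF assms(2), of "column i A"] unfolding \<alpha>_def by auto
  have m0le: "m0 \<le> \<alpha> i" for i unfolding m0_def by simp
  have "m0 \<in> range \<alpha>" unfolding m0_def by (rule Min_in) auto
  then obtain k where k: "\<alpha> k = m0" by auto
  have m01: "0 \<le> m0" "m0 \<le> 1" using a01[of k] k by auto
  have Pq: "Pz q (column i A) = \<alpha> i" for i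
    using fhat_alt[of q "column i A"] assms(2) unfolding is_distr_def \<alpha>_def by simp
  obtain A' where A': "A ** A' = mat 1" "A' ** A = mat 1"
    using assms(1) unfolding invertible_def by blast
  define B where "B = transpose A'"
  have B: "transpose A ** B = mat 1" "B ** transpose A = mat 1"
    unfolding B_def using A' by (metis matrix_transpose_mul transpose_mat)+
  define L where "L s = transpose A *v s" for s :: "bit^'n"
  have bijL: "bij L"
    unfolding L_def
    by (rule bij_betw_byWitness[where f' = "\<lambda>t. B *v t"])
       (auto simp: matrix_vector_mul_assoc B simp del: transpose_matrix_vector)
  define g where "g i b = (if b = 0 then \<alpha> i - m0 else 1 - \<alpha> i) / (1 - m0)" for i and b :: bit
  define pt where "pt t = (if t = 0 then m0 else 0) + (1 - m0) * (\<Prod>i\<in>UNIV. g i (t$i))" for t :: "bit^'n"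
  define p where "p s = pt (L s)" for s
  have gnn: "0 \<le> g i b" for i b
    unfolding g_def using a01[of i] m0le[of i] m01 by auto
  have ptnn: "0 \<le> pt t" for t
    unfolding pt_def using m01 gnn by (auto intro!: add_nonneg_nonneg mult_nonneg_nonneg prod_nonneg)
  have reidx: "(\<Sum>s\<in>UNIV. F (L s)) = (\<Sum>t\<in>UNIV. F t)" for F :: "bit^'n \<Rightarrow> real"
    using sum.reindex[of L UNIV F] bijL by (simp add: bij_def)
  have sum_pt: "(\<Sum>t\<in>UNIV. pt t) = 1"
  proof -
    have "(\<Sum>t\<in>UNIV. pt t) = m0 + (1 - m0) * (\<Prod>i\<in>UNIV. \<Sum>b\<in>UNIV. g i b)"
      unfolding pt_def by (simp add: sum.distrib sum_distrib_left[symmetric] sum_vec_prod[of g])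
    also have "\<dots> = 1"
    proof (cases "m0 = 1")
      case True then show ?thesis by simp
    next
      case False
      then have "(\<Sum>b\<in>UNIV. g i b) = 1" for i
        unfolding UNIV_bit g_def using m01 by (simp add: field_simps)
      then show ?thesis by simp
    qed
    finally show ?thesis .
  qed
  have marg: "(\<Sum>t\<in>UNIV. if t$j = 0 then pt t else 0) = \<alpha> j" for j
  proof -
    define h where "h i b = (if i = j \<and> b = 1 then 0 else g i b)" for i b
    have eq: "(if t$j = 0 then pt t else 0) = (if t = 0 then m0 else 0) + (1 - m0) * (\<Prod>i\<in>UNIV. h i (t$i))" for t
    proof (cases "t$j = 0")
      case True
      then have "h i (t$i) = g i (t$i)" for i unfolding h_def by auto
      then show ?thesis using True unfolding pt_def by simp
    next
      case False
      then have "t \<noteq> 0" by auto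
      moreover have "(\<Prod>i\<in>UNIV. h i (t$i)) = 0"
        by (rule prod_zero) (use False in \<open>auto simp: h_def intro!: bexI[of _ j]\<close>)
      ultimately show ?thesis using False by simp
    qed
    have "(\<Sum>t\<in>UNIV. if t$j = 0 then pt t else 0) = m0 + (1 - m0) * (\<Prod>i\<in>UNIV. \<Sum>b\<in>UNIV. h i b)"
      unfolding eq by (simp add: sum.distrib sum_distrib_left[symmetric] sum_vec_prod[of h])
    also have "\<dots> = \<alpha> j"
    proof (cases "m0 = 1")
      case True then show ?thesis using a01[of j] m0le[of j] by simp
    next
      case False
      then have "(\<Sum>b\<in>UNIV. h i b) = (if i = j then (\<alpha> j - m0) / (1 - m0) else 1)" for i
        unfolding UNIV_bit h_def g_def using m01 by (simp add: field_simps)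
      then have "(\<Prod>i\<in>UNIV. \<Sum>b\<in>UNIV. h i b) = (\<alpha> j - m0) / (1 - m0)"
        by (simp add: prod.If_cases)
      then show ?thesis using False by simp
    qed
    finally show ?thesis .
  qed
  have pdist: "is_distr p"
    unfolding is_distr_def p_def using ptnn reidx[of pt] sum_pt by simp
  have pcons: "fhat p (column i A) = fhat q (column i A)" for i
  proof -
    have "Pz p (column i A) = (\<Sum>s\<in>UNIV. (\<lambda>t. if t$i = 0 then pt t else 0) (L s))"
      unfolding Pz_def p_def dot2_col L_def by simp
    also have "\<dots> = \<alpha> i" using reidx[of "\<lambda>t. if t$i = 0 then pt t else 0"] marg[of i] by simp
    finally show ?thesis using fhat_alt[of p] fhat_alt[of q] Pq[of i] pdist assms(2)
      unfolding is_distr_def by simp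
  qed
  have p0: "p 0 = m0"
  proof -
    have "L 0 = 0" unfolding L_def by simp
    moreover have "(\<Prod>i\<in>UNIV. g i ((0::bit^'n)$i)) = 0"
      by (rule prod_zero) (use k in \<open>auto simp: g_def\<close>)
    ultimately show ?thesis unfolding p_def pt_def by simp
  qed
  have "Fmax A q = m0"
    unfolding Fmax_def
  proof (rule cSup_eq_maximum)
    show "m0 \<in> {p 0 |p. is_distr p \<and> (\<forall>i. fhat p (column i A) = fhat q (column i A))}"
      using pdist pcons p0 by force
  next
    fix x assume "x \<in> {p 0 |p. is_distr p \<and> (\<forall>i. fhat p (column i A) = fhat q (column i A))}"
    then obtain p' where p': "x = p' 0" "is_distr p'" "\<forall>i. fhat p' (column i A) = fhat q (column i A)"
      by blast
    have "Pz p' (column k A) = \<alpha> k"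
      using fhat_alt[of p'] fhat_alt[of q] p' Pq[of k] assms(2) unfolding is_distr_def by simp
    moreover have "p' 0 \<le> Pz p' (column k A)"
      unfolding Pz_def
      using member_le_sum[of 0 UNIV "\<lambda>s. if dot2 (column k A) s = 0 then p' s else 0"] p'(2)
      by (simp add: is_distr_def dot2_def)
    ultimately show "x \<le> m0" using p' k by simp
  qed
  then show ?thesis unfolding m0_def \<alpha>_def .
qed



lemma (in prob_space) hoeff_one:
  fixes X :: "'i \<Rightarrow> 'a \<Rightarrow> real"
  assumes indep: "indep_vars (\<lambda>_. borel) X I" and fin: "finite I" and ne: "I \<noteq> {}"
    and bnd: "\<And>x \<omega>. x \<in> I \<Longrightarrow> \<omega> \<in> space M \<Longrightarrow> X x \<omega> \<in> {0, 1}"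
    and ex: "\<And>x. x \<in> I \<Longrightarrow> expectation (X x) = a"
    and eps: "\<epsilon> > 0"
  shows "prob {\<omega> \<in> space M. \<epsilon> \<le> \<bar>(\<Sum>x\<in>I. X x \<omega>) / real (card I) - a\<bar>}
           \<le> 2 * exp (- 2 * \<epsilon>\<^sup>2 * real (card I))"
proof -
  interpret H: Hoeffding_ineq M I X "\<lambda>_. 0" "\<lambda>_. 1" "\<Sum>x\<in>I. expectation (X x)"
  proof unfold_locales
    show "finite I" by fact
    show "indep_vars (\<lambda>_. borel) X I" by fact
    fix i assume "i \<in> I"
    then show "AE x in M. X i x \<in> {0..1}"
      using bnd by (intro AE_I2) fastforce
  qed simp
  define n where "n = real (card I)"
  have n: "n > 0" unfolding n_def using fin ne by (simp add: card_gt_0_iff)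
  have mu: "(\<Sum>x\<in>I. expectation (X x)) = n * a" unfolding n_def using ex by simp
  have "{\<omega> \<in> space M. \<epsilon> \<le> \<bar>(\<Sum>x\<in>I. X x \<omega>) / real (card I) - a\<bar>}
      = {\<omega> \<in> space M. \<epsilon> * n \<le> \<bar>(\<Sum>x\<in>I. X x \<omega>) - (\<Sum>x\<in>I. expectation (X x))\<bar>}"
  proof -
    have "\<epsilon> \<le> \<bar>s / n - a\<bar> \<longleftrightarrow> \<epsilon> * n \<le> \<bar>s - n * a\<bar>" for s
    proof -
      have "\<bar>s / n - a\<bar> = \<bar>s - n * a\<bar> / n" using n by (simp add: field_simps)
      then show ?thesis using n by (simp add: pos_le_divide_eq)
    qed
    then show ?thesis unfolding mu n_def[symmetric] by auto
  qed
  also have "prob \<dots> \<le> 2 * exp (- 2 * (\<epsilon> * n)\<^sup>2 / (\<Sum>i\<in>I. (1 - 0)\<^sup>2))"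
    by (rule H.Hoeffding_ineq_abs_ge) (use eps n fin ne in \<open>auto simp: n_def\<close>)
  also have "(\<Sum>i\<in>I. (1 - 0 :: real)\<^sup>2) = n" unfolding n_def by simp
  also have "- 2 * (\<epsilon> * n)\<^sup>2 / n = - 2 * \<epsilon>\<^sup>2 * n" using n by (simp add: power2_eq_square)
  finally show ?thesis unfolding n_def .
qed

lemma Min_close:
  fixes f g :: "'i::finite \<Rightarrow> real"
  assumes "\<And>i. \<bar>f i - g i\<bar> \<le> e"
  shows "\<bar>(MIN i. f i) - (MIN i. g i)\<bar> \<le> e"
proof -
  have "(MIN i. f i) \<in> range f" by (rule Min_in) auto
  then obtain a where a: "f a = (MIN i. f i)" by (metis imageE)
  have "(MIN i. g i) \<in> range g" by (rule Min_in) auto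
  then obtain b where b: "g b = (MIN i. g i)" by (metis imageE)
  have 1: "(MIN i. f i) \<le> f b" by simp
  have 2: "(MIN i. g i) \<le> g a" by simp
  have 3: "\<bar>f a - g a\<bar> \<le> e" "\<bar>f b - g b\<bar> \<le> e" using assms by auto
  show ?thesis using 1 2 3 unfolding a[symmetric] b[symmetric] abs_le_iff by linarith
qed



theorem proposition3:
  fixes A :: "bit^'n^'n::finite"
    and q :: "bit^'n \<Rightarrow> real"
    and M :: "'w measure"
    and Y :: "'n \<Rightarrow> nat \<Rightarrow> 'w \<Rightarrow> real"
    and m :: "'n \<Rightarrow> nat"
    and \<epsilon> \<delta> :: real
  assumes "invertible A"
    and "is_distr q"
    and "\<epsilon> > 0" and "0 < \<delta>" and "\<delta> < 1"
    and "prob_space M"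
    and "prob_space.indep_vars M (\<lambda>_. borel) (\<lambda>(i, j). Y i j) {(i, j). 1 \<le> j \<and> j \<le> m i}"
    and "\<And>i j \<omega>. 1 \<le> j \<Longrightarrow> j \<le> m i \<Longrightarrow> \<omega> \<in> space M \<Longrightarrow> Y i j \<omega> \<in> {0, 1}"
    and "\<And>i j. 1 \<le> j \<Longrightarrow> j \<le> m i \<Longrightarrow>
           prob_space.expectation M (Y i j) = (1 + fhat q (column i A)) / 2"
    and "\<And>i. real (m i) \<ge> real_of_int \<lceil>ln (2 * real CARD('n) / \<delta>) / (2 * \<epsilon>\<^sup>2)\<rceil>"
  shows "measure M {\<omega> \<in> space M.
            \<bar>(MIN i. (\<Sum>j = 1..m i. Y i j \<omega>) / real (m i)) - Fmax A q\<bar> \<le> \<epsilon>} \<ge> 1 - \<delta>"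
proof -
  interpret prob_space M by fact
  note indep = assms(7)
  define \<alpha> where "\<alpha> i = (1 + fhat q (column i A)) / 2" for i
  define F where "F i \<omega> = (\<Sum>j = 1..m i. Y i j \<omega>) / real (m i)" for i \<omega>
  define N where "N = real CARD('n)"
  have N: "N > 0" unfolding N_def by simp
  have N1: "N \<ge> 1" unfolding N_def using finite_UNIV_card_ge_0[where 'a='n] by (simp add: Suc_le_eq)
  define Lg where "Lg = ln (2 * N / \<delta>)"
  have Lg: "Lg > 0" unfolding Lg_def using N1 assms(4,5) by simp
  have mlow: "real (m i) \<ge> Lg / (2 * \<epsilon>\<^sup>2)" for i
    using assms(10)[of i] unfolding Lg_def N_def by linarith
  have mpos: "m i > 0" for i
  proof -
    have "Lg / (2 * \<epsilon>\<^sup>2) > 0" using Lg assms(3) by simp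
    then show ?thesis using mlow[of i] by linarith
  qed
  have Ymeas: "Y i j \<in> borel_measurable M" if "1 \<le> j" "j \<le> m i" for i j
    using indep that unfolding indep_vars_def by auto
  have Fmeas[measurable]: "F i \<in> borel_measurable M" for i
    unfolding F_def by (intro borel_measurable_divide borel_measurable_sum Ymeas) auto
  define bad where "bad i = {\<omega> \<in> space M. \<epsilon> \<le> \<bar>F i \<omega> - \<alpha> i\<bar>}" for i
  have bad_sets: "bad i \<in> sets M" for i
    unfolding bad_def by (intro borel_measurable_le borel_measurable_abs borel_measurable_diff Fmeas) simp_all
  have bad_prob: "prob (bad i) \<le> \<delta> / N" for i
  proof -
    define I where "I = (\<lambda>j. (i, j)) ` {1..m i}"
    have injI: "inj_on (\<lambda>j. (i, j)) {1..m i}" by (auto simp: inj_on_def)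
    have cardI: "card I = m i" unfolding I_def using card_image[OF injI] by simp
    have sumI: "(\<Sum>x\<in>I. (\<lambda>(i, j). Y i j) x \<omega>) = (\<Sum>j = 1..m i. Y i j \<omega>)" for \<omega>
      unfolding I_def by (subst sum.reindex[OF injI]) auto
    have "prob {\<omega> \<in> space M. \<epsilon> \<le> \<bar>(\<Sum>x\<in>I. (\<lambda>(i, j). Y i j) x \<omega>) / real (card I) - \<alpha> i\<bar>}
           \<le> 2 * exp (- 2 * \<epsilon>\<^sup>2 * real (card I))"
    proof (rule hoeff_one)
      show "indep_vars (\<lambda>_. borel) (\<lambda>(i, j). Y i j) I"
        by (rule indep_vars_subset[OF indep]) (auto simp: I_def)
      show "finite I" unfolding I_def by simp
      show "I \<noteq> {}" using mpos[of i] unfolding I_def by auto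
      show "(case x of (i, j) \<Rightarrow> Y i j) \<omega> \<in> {0, 1}" if xI: "x \<in> I" and wS: "\<omega> \<in> space M" for x \<omega>
      proof -
        obtain j where "x = (i, j)" "j \<in> {1..m i}" using xI unfolding I_def by (rule imageE)
        then show ?thesis using assms(8)[of j i \<omega>] wS by simp
      qed
      show "expectation (case x of (i, j) \<Rightarrow> Y i j) = \<alpha> i" if xI: "x \<in> I" for x
      proof -
        obtain j where "x = (i, j)" "j \<in> {1..m i}" using xI unfolding I_def by (rule imageE)
        then show ?thesis using assms(9)[of j i] unfolding \<alpha>_def by simp
      qed
      show "\<epsilon> > 0" by fact
    qed
    also have "{\<omega> \<in> space M. \<epsilon> \<le> \<bar>(\<Sum>x\<in>I. (\<lambda>(i, j). Y i j) x \<omega>) / real (card I) - \<alpha> i\<bar>} = bad i"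
      unfolding bad_def F_def sumI cardI ..
    also have "2 * exp (- 2 * \<epsilon>\<^sup>2 * real (card I)) \<le> 2 * exp (- Lg)"
    proof -
      have "Lg \<le> 2 * \<epsilon>\<^sup>2 * real (m i)"
        using mlow[of i] assms(3) by (simp add: field_simps)
      then show ?thesis unfolding cardI by simp
    qed
    also have "2 * exp (- Lg) = \<delta> / N"
      unfolding Lg_def using N assms(4) by (simp add: exp_minus ln_div exp_diff)
    finally show ?thesis .
  qed
  have Fm: "Fmax A q = (MIN i. \<alpha> i)" unfolding \<alpha>_def by (rule Fmax_eq[OF assms(1,2)])
  define good where "good = {\<omega> \<in> space M. \<bar>(MIN i. F i \<omega>) - Fmax A q\<bar> \<le> \<epsilon>}"
  have Minm: "(\<lambda>\<omega>. MIN i. F i \<omega>) \<in> borel_measurable M"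
    by (rule borel_measurable_Min) (auto intro: Fmeas)
  have good_sets: "good \<in> sets M"
    unfolding good_def by (intro borel_measurable_le borel_measurable_abs borel_measurable_diff Minm) simp_all
  have sub: "space M - (\<Union>i. bad i) \<subseteq> good"
  proof
    fix \<omega> assume w: "\<omega> \<in> space M - (\<Union>i. bad i)"
    then have "\<bar>F i \<omega> - \<alpha> i\<bar> \<le> \<epsilon>" for i
      using w unfolding bad_def by (auto simp: not_le intro: less_imp_le)
    then have "\<bar>(MIN i. F i \<omega>) - (MIN i. \<alpha> i)\<bar> \<le> \<epsilon>" by (rule Min_close)
    then show "\<omega> \<in> good" using w unfolding good_def Fm by auto
  qed
  have "1 - \<delta> \<le> 1 - prob (\<Union>i. bad i)"
  proof -
    have "prob (\<Union>i. bad i) \<le> (\<Sum>i\<in>UNIV. prob (bad i))"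
      by (rule measure_UNION_le) (auto simp: bad_sets)
    also have "\<dots> \<le> (\<Sum>i\<in>(UNIV::'n set). \<delta> / N)" by (rule sum_mono) (rule bad_prob)
    also have "\<dots> = \<delta>" using N unfolding N_def by simp
    finally show ?thesis by simp
  qed
  also have "\<dots> = prob (space M - (\<Union>i. bad i))"
    by (rule prob_compl[symmetric]) (auto simp: bad_sets)
  also have "\<dots> \<le> prob good"
    by (rule finite_measure_mono[OF sub good_sets])
  finally show ?thesis unfolding good_def F_def .
qed

end
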